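(* Let $X$ be a finite set and let $\tau\subseteq\binom{X}{2}$ with $L(\tau)=X$. The following are equivalent: (i) $\tau$ is thin, i.e. $|L(\tau')|\ge|\tau'|+1$ for every non-empty $\tau'\subseteq\tau$; (ii) there exists a rooted binary phylogenetic $X$-tree $T$ for which the map $s\mapsto{\rm lca}_T(s)$ from $\tau$ to the set of interior vertices of $T$ is one-to-one; (iii) as in (ii), but with $T$ a rooted caterpillar tree.
   Context: $L(\tau)=\bigcup_{s\in\tau}s$. A rooted binary phylogenetic $X$-tree is a rooted tree whose leaves (out-degree 0) are bijectively labelled by $X$ and whose non-leaf vertices are unlabelled with out-degree exactly 2. Interior vertices are non-leaf vertices. A cherry is a pair of leaves adjacent to a common vertex; a rooted caterpillar tree is a rooted binary phylogenetic tree with at most one cherry. For $s\subseteq X$, ${\rm lca}_T(s)$ is the least common ancestor in $T$ of the leaves in $s$. *)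

theory Defs
  imports Main
begin

text \<open>Vertices of the tree are identified with the subtrees rooted at them (this is
unambiguous because leaf labels are distinct).\<close>

datatype 'a rbtree = Leaf 'a | Node "'a rbtree" "'a rbtree"

fun leaf_list :: "'a rbtree \<Rightarrow> 'a list" where
  "leaf_list (Leaf a) = [a]"
| "leaf_list (Node l r) = leaf_list l @ leaf_list r"

definition leaves :: "'a rbtree \<Rightarrow> 'a set" where
  "leaves t = set (leaf_list t)"

definition phylo_tree :: "'a set \<Rightarrow> 'a rbtree \<Rightarrow> bool" where
  "phylo_tree X T \<longleftrightarrow> distinct (leaf_list T) \<and> leaves T = X"

text \<open>All vertices of T (as subtrees rooted at them); v is a descendant of w
iff v \<in> vertices w.\<close>
fun vertices :: "'a rbtree \<Rightarrow> 'a rbtree set" where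
  "vertices (Leaf a) = {Leaf a}"
| "vertices (Node l r) = insert (Node l r) (vertices l \<union> vertices r)"

definition interior_vertices :: "'a rbtree \<Rightarrow> 'a rbtree set" where
  "interior_vertices T = {v \<in> vertices T. \<exists>l r. v = Node l r}"

definition lca :: "'a rbtree \<Rightarrow> 'a set \<Rightarrow> 'a rbtree" where
  "lca T s = (THE v. v \<in> vertices T \<and> s \<subseteq> leaves v \<and>
       (\<forall>w\<in>vertices T. s \<subseteq> leaves w \<longrightarrow> v \<in> vertices w))"

definition cherries :: "'a rbtree \<Rightarrow> 'a rbtree set" where
  "cherries T = {v \<in> vertices T. \<exists>a b. v = Node (Leaf a) (Leaf b)}"

definition caterpillar :: "'a rbtree \<Rightarrow> bool" where
  "caterpillar T \<longleftrightarrow> card (cherries T) \<le> 1"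

definition thin :: "'a set set \<Rightarrow> bool" where
  "thin \<tau> \<longleftrightarrow> (\<forall>\<tau>'. \<tau>' \<subseteq> \<tau> \<and> \<tau>' \<noteq> {} \<longrightarrow> card (\<Union>\<tau>') \<ge> card \<tau>' + 1)"

end

theory Submission
  imports Defs
begin

lemma leaves_simps[simp]: "leaves (Leaf a) = {a}" "leaves (Node l r) = leaves l \<union> leaves r"
  by (auto simp: leaves_def)

lemma finite_leaves[simp]: "finite (leaves t)"
  by (simp add: leaves_def)

lemma finite_vertices[simp]: "finite (vertices t)"
  by (induction t) auto

lemma self_vertices[simp]: "t \<in> vertices t"
  by (cases t) auto

lemma vertices_size: "v \<in> vertices w \<Longrightarrow> v = w \<or> size v < size w"
  by (induction w) auto

lemma vertices_antisym: "v \<in> vertices w \<Longrightarrow> w \<in> vertices v \<Longrightarrow> v = w"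
  using vertices_size[of v w] vertices_size[of w v] by auto

lemma vertices_trans: "v \<in> vertices w \<Longrightarrow> w \<in> vertices t \<Longrightarrow> v \<in> vertices t"
  by (induction t) auto

lemma leaves_vertices: "v \<in> vertices t \<Longrightarrow> leaves v \<subseteq> leaves t"
  by (induction t) auto

lemma distinct_Node: "distinct (leaf_list (Node l r)) \<longleftrightarrow>
  distinct (leaf_list l) \<and> distinct (leaf_list r) \<and> leaves l \<inter> leaves r = {}"
  by (simp add: leaves_def)

fun mylca :: "'a rbtree \<Rightarrow> 'a set \<Rightarrow> 'a rbtree" where
  "mylca (Leaf a) s = Leaf a"
| "mylca (Node l r) s = (if s \<subseteq> leaves l then mylca l s
      else if s \<subseteq> leaves r then mylca r s else Node l r)"

lemma mylca_vert: "mylca T s \<in> vertices T"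
  by (induction T) auto

lemma mylca_leaves: "s \<subseteq> leaves T \<Longrightarrow> s \<subseteq> leaves (mylca T s)"
  by (induction T) auto

lemma mylca_least: "distinct (leaf_list T) \<Longrightarrow> s \<noteq> {} \<Longrightarrow> s \<subseteq> leaves T \<Longrightarrow>
   w \<in> vertices T \<Longrightarrow> s \<subseteq> leaves w \<Longrightarrow> mylca T s \<in> vertices w"
proof (induction T arbitrary: w)
  case (Leaf a)
  then show ?case by auto
next
  case (Node l r)
  from Node.prems(1) have dl: "distinct (leaf_list l)" and dr: "distinct (leaf_list r)"
    and dis: "leaves l \<inter> leaves r = {}" using distinct_Node[of l r] by blast+
  show ?case
  proof (cases "s \<subseteq> leaves l")
    case True
    show ?thesis
    proof -
      have "w = Node l r \<or> w \<in> vertices l \<or> w \<in> vertices r" using Node.prems(4) by auto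
      moreover have "w \<in> vertices r \<Longrightarrow> False"
        using leaves_vertices[of w r] Node.prems(2,5) True dis by blast
      ultimately show ?thesis using True Node.IH(1)[OF dl Node.prems(2) True, of w] Node.prems(5)
        mylca_vert[of l s] by auto
    qed
  next
    case False
    note F = False
    show ?thesis
    proof (cases "s \<subseteq> leaves r")
      case True
      have "w = Node l r \<or> w \<in> vertices l \<or> w \<in> vertices r" using Node.prems(4) by auto
      moreover have "w \<in> vertices l \<Longrightarrow> False"
        using leaves_vertices[of w l] Node.prems(2,5) True dis by blast
      ultimately show ?thesis using True F Node.IH(2)[OF dr Node.prems(2) True, of w] Node.prems(5)
        mylca_vert[of r s] by auto
    next
      case False
      have "w = Node l r \<or> w \<in> vertices l \<or> w \<in> vertices r" using Node.prems(4) by auto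
      moreover have "w \<in> vertices l \<Longrightarrow> False"
        using leaves_vertices[of w l] Node.prems(5) F by blast
      moreover have "w \<in> vertices r \<Longrightarrow> False"
        using leaves_vertices[of w r] Node.prems(5) False by blast
      ultimately show ?thesis using F False by auto
    qed
  qed
qed

lemma lca_eq: "distinct (leaf_list T) \<Longrightarrow> s \<noteq> {} \<Longrightarrow> s \<subseteq> leaves T \<Longrightarrow> lca T s = mylca T s"
  unfolding lca_def
  apply (rule the_equality)
   apply (auto simp: mylca_vert mylca_leaves mylca_least)[1]
  by (meson mylca_least mylca_vert mylca_leaves vertices_antisym)

lemma mylca_interior: "card s = 2 \<Longrightarrow> s \<subseteq> leaves T \<Longrightarrow> mylca T s \<in> interior_vertices T"
proof -
  assume c: "card s = 2" and sub: "s \<subseteq> leaves T"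
  have "\<not> (\<exists>a. mylca T s = Leaf a)"
  proof
    assume "\<exists>a. mylca T s = Leaf a"
    then obtain a where "mylca T s = Leaf a" by blast
    with mylca_leaves[OF sub] have "s \<subseteq> {a}" by simp
    then have "card s \<le> 1" using card_mono[of "{a}" s] by simp
    with c show False by simp
  qed
  then show ?thesis unfolding interior_vertices_def using mylca_vert[of T s]
    by (cases "mylca T s") auto
qed


definition prs :: "'a set \<Rightarrow> 'a set set" where
  "prs S = {{x,y} | x y. x \<in> S \<and> y \<in> S \<and> x \<noteq> y}"

lemma count_lca: "distinct (leaf_list T) \<Longrightarrow> S \<subseteq> leaves T \<Longrightarrow> S \<noteq> {} \<Longrightarrow>
  card (mylca T ` prs S) < card S"
proof (induction T arbitrary: S)
  case (Leaf a)
  then have "S = {a}" by auto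
  then have "prs S = {}" by (auto simp: prs_def)
  then show ?case using \<open>S = {a}\<close> by simp
next
  case (Node l r)
  from Node.prems(1) have dl: "distinct (leaf_list l)" and dr: "distinct (leaf_list r)"
    and dis: "leaves l \<inter> leaves r = {}" using distinct_Node[of l r] by blast+
  define A where "A = S \<inter> leaves l"
  define B where "B = S \<inter> leaves r"
  have SAB: "S = A \<union> B" and ABd: "A \<inter> B = {}" using Node.prems(2) dis by (auto simp: A_def B_def)
  have finS: "finite S" using Node.prems(2) finite_subset finite_leaves by blast
  have fA: "finite A" "finite B" using finS SAB by auto
  have sl: "\<And>p. p \<in> prs A \<Longrightarrow> mylca (Node l r) p = mylca l p"
    by (auto simp: prs_def A_def)
  have sr: "\<And>p. p \<in> prs B \<Longrightarrow> mylca (Node l r) p = mylca r p"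
    using dis by (auto simp: prs_def B_def)
  have sub: "mylca (Node l r) ` prs S \<subseteq> mylca l ` prs A \<union> mylca r ` prs B \<union>
      (if A \<noteq> {} \<and> B \<noteq> {} then {Node l r} else {})"
  proof
    fix v assume "v \<in> mylca (Node l r) ` prs S"
    then obtain x y where xy: "x \<in> S" "y \<in> S" "x \<noteq> y" and v: "v = mylca (Node l r) {x,y}"
      unfolding prs_def by blast
    consider "x \<in> A" "y \<in> A" | "x \<in> B" "y \<in> B" | "x \<in> A" "y \<in> B" | "x \<in> B" "y \<in> A"
      using xy SAB by blast
    then show "v \<in> mylca l ` prs A \<union> mylca r ` prs B \<union>
      (if A \<noteq> {} \<and> B \<noteq> {} then {Node l r} else {})"
    proof cases
      case 1
      then have "{x,y} \<in> prs A" using xy by (auto simp: prs_def)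
      then have "mylca (Node l r) {x,y} = mylca l {x,y}" by (rule sl)
      then have "v = mylca l {x,y}" using v by simp
      then have "v \<in> mylca l ` prs A" using \<open>{x,y} \<in> prs A\<close> by blast
      then show ?thesis by blast
    next
      case 2
      then have "{x,y} \<in> prs B" using xy by (auto simp: prs_def)
      then have "mylca (Node l r) {x,y} = mylca r {x,y}" by (rule sr)
      then have "v = mylca r {x,y}" using v by simp
      then have "v \<in> mylca r ` prs B" using \<open>{x,y} \<in> prs B\<close> by blast
      then show ?thesis by blast
    next
      case 3
      then have "\<not> {x,y} \<subseteq> leaves l" "\<not> {x,y} \<subseteq> leaves r" using dis by (auto simp: A_def B_def)
      then have "v = Node l r" using v by (simp only: mylca.simps if_False)
      moreover have "A \<noteq> {}" "B \<noteq> {}" using 3 by auto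
      ultimately show ?thesis by simp
    next
      case 4
      then have "\<not> {x,y} \<subseteq> leaves l" "\<not> {x,y} \<subseteq> leaves r" using dis by (auto simp: A_def B_def)
      then have "v = Node l r" using v by (simp only: mylca.simps if_False)
      moreover have "A \<noteq> {}" "B \<noteq> {}" using 4 by auto
      ultimately show ?thesis by simp
    qed
  qed
  have fin: "finite (mylca l ` prs A \<union> mylca r ` prs B \<union>
      (if A \<noteq> {} \<and> B \<noteq> {} then {Node l r} else {}))"
    by (rule finite_subset[of _ "vertices (Node l r)"]) (auto simp: mylca_vert)
  have IHA: "A \<noteq> {} \<Longrightarrow> card (mylca l ` prs A) < card A"
    using Node.IH(1)[OF dl, of A] by (auto simp: A_def)
  have IHB: "B \<noteq> {} \<Longrightarrow> card (mylca r ` prs B) < card B"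
    using Node.IH(2)[OF dr, of B] by (auto simp: B_def)
  have pe: "prs {} = {}" by (auto simp: prs_def)
  have cS: "card S = card A + card B" using SAB ABd fA card_Un_disjoint by blast
  have "card (mylca (Node l r) ` prs S) \<le> card (mylca l ` prs A \<union> mylca r ` prs B \<union>
      (if A \<noteq> {} \<and> B \<noteq> {} then {Node l r} else {}))"
    by (rule card_mono[OF fin sub])
  also have "\<dots> \<le> card (mylca l ` prs A) + card (mylca r ` prs B) +
      card (if A \<noteq> {} \<and> B \<noteq> {} then {Node l r} else {})"
    using card_Un_le[of "mylca l ` prs A \<union> mylca r ` prs B" "(if A \<noteq> {} \<and> B \<noteq> {} then {Node l r} else {})"]
      card_Un_le[of "mylca l ` prs A" "mylca r ` prs B"] by linarith
  also have "\<dots> < card S"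
    using IHA IHB cS Node.prems(3) SAB by (cases "A = {}"; cases "B = {}") (auto simp add: pe)
  finally show ?case .
qed

lemma thin_subset: "thin \<tau> \<Longrightarrow> \<tau>' \<subseteq> \<tau> \<Longrightarrow> thin \<tau>'"
  unfolding thin_def by blast

lemma ii_i:
  assumes "phylo_tree X T" "inj_on (lca T) \<tau>" "\<tau> \<subseteq> {s. s \<subseteq> X \<and> card s = 2}"
  shows "thin \<tau>"
  unfolding thin_def
proof (intro allI impI)
  fix \<tau>' assume a: "\<tau>' \<subseteq> \<tau> \<and> \<tau>' \<noteq> {}"
  define S where "S = \<Union>\<tau>'"
  have d: "distinct (leaf_list T)" and lv: "leaves T = X" using assms(1) by (auto simp: phylo_tree_def)
  have SX: "S \<subseteq> leaves T" using a assms(3) lv by (auto simp: S_def)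
  have Sne: "S \<noteq> {}"
  proof -
    obtain s where s: "s \<in> \<tau>'" using a by blast
    then have "card s = 2" using a assms(3) by auto
    then have "s \<noteq> {}" by auto
    then show ?thesis using s by (auto simp: S_def)
  qed
  have img: "lca T ` \<tau>' \<subseteq> mylca T ` prs S"
  proof
    fix v assume "v \<in> lca T ` \<tau>'"
    then obtain s where s: "s \<in> \<tau>'" "v = lca T s" by blast
    have c: "card s = 2" "s \<subseteq> X" using s a assms(3) by auto
    then obtain x y where xy: "x \<noteq> y" "s = {x,y}" by (meson card_2_iff)
    have "x \<in> S" "y \<in> S" using xy s by (auto simp: S_def)
    then have "s \<in> prs S" unfolding prs_def using xy by blast
    moreover have "v = mylca T s" using s lca_eq[OF d, of s] xy c lv by auto
    ultimately show "v \<in> mylca T ` prs S" by blast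
  qed
  have fin: "finite (mylca T ` prs S)"
    by (rule finite_subset[of _ "vertices T"]) (auto simp: mylca_vert)
  have "card \<tau>' = card (lca T ` \<tau>')"
    using card_image[of "lca T" \<tau>'] inj_on_subset[OF assms(2)] a by auto
  also have "\<dots> \<le> card (mylca T ` prs S)" by (rule card_mono[OF fin img])
  also have "\<dots> < card S" by (rule count_lca[OF d SX Sne])
  finally show "card (\<Union>\<tau>') \<ge> card \<tau>' + 1" by (simp add: S_def)
qed


lemma cherries_Leaf: "cherries (Leaf a) = {}"
  by (auto simp: cherries_def)

lemma cherries_cat: "cherries (Node t (Leaf x)) =
   (if (\<exists>a. t = Leaf a) then {Node t (Leaf x)} else {}) \<union> cherries t"
  by (cases t) (auto simp: cherries_def)

lemma finite_cherries: "finite (cherries t)"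
  unfolding cherries_def by simp

lemma deg_exists:
  assumes fin: "finite X" and X: "X \<noteq> {}" and tau: "\<tau> \<subseteq> {s. s \<subseteq> X \<and> card s = 2}"
    and th: "thin \<tau>"
  shows "\<exists>x\<in>X. card {s\<in>\<tau>. x \<in> s} \<le> 1"
proof (rule ccontr)
  assume "\<not> ?thesis"
  then have deg: "\<And>x. x \<in> X \<Longrightarrow> 2 \<le> card {s\<in>\<tau>. x \<in> s}" by force
  have "\<tau> \<subseteq> Pow X" using tau by auto
  then have finT: "finite \<tau>" using fin finite_subset by blast
  show False
  proof (cases "\<tau> = {}")
    case True
    then show False using deg X by auto
  next
    case False
    define U where "U = \<Union>\<tau>"
    have UX: "U \<subseteq> X" using tau by (auto simp: U_def)
    have finU: "finite U" using UX fin finite_subset by blast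
    have "2 * card U = (\<Sum>x\<in>U. 2)" by simp
    also have "\<dots> \<le> (\<Sum>x\<in>U. card {s\<in>\<tau>. x \<in> s})"
      by (rule sum_mono) (use deg UX in auto)
    also have "\<dots> = (\<Sum>x\<in>U. \<Sum>s\<in>\<tau>. if x \<in> s then 1 else 0)"
      by (rule sum.cong) (auto simp: sum.If_cases finT Int_def)
    also have "\<dots> = (\<Sum>s\<in>\<tau>. \<Sum>x\<in>U. if x \<in> s then 1 else 0)"
      by (rule sum.swap)
    also have "\<dots> = (\<Sum>s\<in>\<tau>. card s)"
    proof (rule sum.cong)
      fix s assume "s \<in> \<tau>"
      then have "s \<subseteq> U" by (auto simp: U_def)
      then have "U \<inter> s = s" by blast
      then show "(\<Sum>x\<in>U. if x \<in> s then 1 else 0) = card s"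
        by (simp add: sum.If_cases finU)
    qed simp
    also have "\<dots> = (\<Sum>s\<in>\<tau>. 2)" using tau by (intro sum.cong) auto
    also have "\<dots> = 2 * card \<tau>" by simp
    finally have "card U \<le> card \<tau>" by simp
    moreover have "card U \<ge> card \<tau> + 1" using th False unfolding thin_def U_def by blast
    ultimately show False by simp
  qed
qed

lemma construct:
  "finite X \<Longrightarrow> X \<noteq> {} \<Longrightarrow> \<tau> \<subseteq> {s. s \<subseteq> X \<and> card s = 2} \<Longrightarrow> thin \<tau> \<Longrightarrow>
   \<exists>T. phylo_tree X T \<and> card (cherries T) \<le> 1 \<and> inj_on (mylca T) \<tau>"
proof (induction "card X" arbitrary: X \<tau> rule: less_induct)
  case less
  obtain x where x: "x \<in> X" and dg: "card {s\<in>\<tau>. x \<in> s} \<le> 1"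
    using deg_exists[OF less.prems] by blast
  have "\<tau> \<subseteq> Pow X" using less.prems(3) by auto
  then have finT: "finite \<tau>" using less.prems(1) finite_subset by blast
  show ?case
  proof (cases "X = {x}")
    case True
    have "\<tau> = {}"
    proof (rule ccontr)
      assume "\<tau> \<noteq> {}"
      then obtain s where "s \<in> \<tau>" by blast
      then have "s \<subseteq> {x}" "card s = 2" using less.prems(3) True by auto
      then show False using card_mono[of "{x}" s] by simp
    qed
    then show ?thesis using True
      by (intro exI[of _ "Leaf x"]) (auto simp: phylo_tree_def leaves_def cherries_Leaf)
  next
    case False
    define X' where "X' = X - {x}"
    define \<tau>' where "\<tau>' = {s\<in>\<tau>. x \<notin> s}"
    have X'ne: "X' \<noteq> {}" using False x by (auto simp: X'_def)
    have cX': "card X' < card X" using x less.prems(1) using card_gt_0_iff[of X] by (auto simp add: X'_def) 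
    have t': "\<tau>' \<subseteq> {s. s \<subseteq> X' \<and> card s = 2}" using less.prems(3) by (auto simp: X'_def \<tau>'_def)
    have th': "thin \<tau>'" using thin_subset[OF less.prems(4)] by (auto simp: \<tau>'_def)
    obtain T' where ph: "phylo_tree X' T'" and ch: "card (cherries T') \<le> 1"
      and inj: "inj_on (mylca T') \<tau>'"
      using less.hyps[OF cX' _ X'ne t' th'] less.prems(1) by (auto simp: X'_def)
    define T where "T = Node T' (Leaf x)"
    have lT': "leaves T' = X'" and dT': "distinct (leaf_list T')" using ph by (auto simp: phylo_tree_def)
    have xn: "x \<notin> leaves T'" using lT' by (auto simp: X'_def)
    have phT: "phylo_tree X T" using lT' dT' xn x
      by (auto simp: phylo_tree_def T_def X'_def leaves_def)
    have chT: "card (cherries T) \<le> 1"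
    proof (cases "\<exists>a. T' = Leaf a")
      case True
      then show ?thesis by (auto simp: T_def cherries_cat cherries_Leaf)
    next
      case False
      then show ?thesis using ch by (simp add: T_def cherries_cat)
    qed
    have m1: "\<And>s. s \<in> \<tau>' \<Longrightarrow> mylca T s = mylca T' s"
      using t' lT' by (auto simp: T_def)
    have m2: "\<And>s. s \<in> \<tau> \<Longrightarrow> x \<in> s \<Longrightarrow> mylca T s = T"
    proof -
      fix s assume s: "s \<in> \<tau>" "x \<in> s"
      have "card s = 2" using s less.prems(3) by auto
      then have "\<not> s \<subseteq> {x}" using card_mono[of "{x}" s] by auto
      moreover have "\<not> s \<subseteq> leaves T'" using xn s by auto
      ultimately show "mylca T s = T" by (simp add: T_def)
    qed
    have nT: "mylca T' s \<noteq> T" for s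
    proof
      assume "mylca T' s = T"
      then show False using vertices_size[OF mylca_vert[of T' s]] unfolding T_def by simp
    qed
    have injT: "inj_on (mylca T) \<tau>"
    proof (rule inj_onI)
      fix s1 s2 assume s: "s1 \<in> \<tau>" "s2 \<in> \<tau>" and e: "mylca T s1 = mylca T s2"
      show "s1 = s2"
      proof (cases "x \<in> s1"; cases "x \<in> s2")
        assume "x \<in> s1" "x \<in> s2"
        then have "s1 \<in> {s\<in>\<tau>. x \<in> s}" "s2 \<in> {s\<in>\<tau>. x \<in> s}" using s by auto
        then show ?thesis using dg finT card_le_Suc0_iff_eq[of "{s\<in>\<tau>. x \<in> s}"] by auto
      next
        assume "x \<in> s1" "x \<notin> s2"
        then show ?thesis using e m1[of s2] m2[of s1] nT[of s2] s by (auto simp: \<tau>'_def)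
      next
        assume "x \<notin> s1" "x \<in> s2"
        then show ?thesis using e m1[of s1] m2[of s2] nT[of s1] s by (auto simp: \<tau>'_def)
      next
        assume "x \<notin> s1" "x \<notin> s2"
        then have "s1 \<in> \<tau>'" "s2 \<in> \<tau>'" using s by (auto simp: \<tau>'_def)
        then show ?thesis using e m1 inj by (metis inj_on_def)
      qed
    qed
    show ?thesis using phT chT injT by blast
  qed
qed


theorem theorem4:
  fixes X :: "'a set" and \<tau> :: "'a set set"
  assumes "finite X" and "X \<noteq> {}"
    and "\<tau> \<subseteq> {s. s \<subseteq> X \<and> card s = 2}"
    and "\<Union>\<tau> = X"
  shows "(thin \<tau> \<longleftrightarrow>
           (\<exists>T. phylo_tree X T \<and> lca T ` \<tau> \<subseteq> interior_vertices T \<and> inj_on (lca T) \<tau>))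
       \<and> ((\<exists>T. phylo_tree X T \<and> lca T ` \<tau> \<subseteq> interior_vertices T \<and> inj_on (lca T) \<tau>) \<longleftrightarrow>
           (\<exists>T. phylo_tree X T \<and> caterpillar T \<and> lca T ` \<tau> \<subseteq> interior_vertices T
                \<and> inj_on (lca T) \<tau>))"
proof -
  have a: "(\<exists>T. phylo_tree X T \<and> caterpillar T \<and> lca T ` \<tau> \<subseteq> interior_vertices T
                \<and> inj_on (lca T) \<tau>)" if th: "thin \<tau>"
  proof -
    obtain T where ph: "phylo_tree X T" and ch: "card (cherries T) \<le> 1"
      and inj: "inj_on (mylca T) \<tau>"
      using construct[OF assms(1,2,3) th] by blast
    have d: "distinct (leaf_list T)" and lv: "leaves T = X" using ph by (auto simp: phylo_tree_def)
    have eq: "lca T s = mylca T s" if "s \<in> \<tau>" for s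
    proof -
      have "card s = 2" "s \<subseteq> X" using that assms(3) by auto
      then have "s \<noteq> {}" "s \<subseteq> leaves T" using lv by auto
      then show ?thesis using lca_eq[OF d] by blast
    qed
    have "inj_on (lca T) \<tau>" using inj inj_on_cong[of \<tau> "lca T" "mylca T"] eq by blast
    moreover have "lca T ` \<tau> \<subseteq> interior_vertices T"
    proof
      fix v assume "v \<in> lca T ` \<tau>"
      then obtain s where s: "s \<in> \<tau>" "v = lca T s" by blast
      have "card s = 2" "s \<subseteq> leaves T" using s assms(3) lv by auto
      then show "v \<in> interior_vertices T" using mylca_interior eq s by metis
    qed
    ultimately show ?thesis using ph ch unfolding caterpillar_def by blast
  qed
  have b: "thin \<tau>" if "\<exists>T. phylo_tree X T \<and> lca T ` \<tau> \<subseteq> interior_vertices T \<and> inj_on (lca T) \<tau>"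
    using that ii_i assms(3) by blast
  show ?thesis using a b by blast
qed

end
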